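(* Let $H_1$ and $H_2$ be simple, undirected, connected graphs of girth at least $6$ on the same vertex set $V$. Suppose that $H_1^2 = H_2^2$ and that $u,v,w \in V$ are three vertices such that $uvw$ is a path in both $H_1$ and $H_2$ (i.e. $uv$ and $vw$ are edges of both $H_1$ and $H_2$, with $u,v,w$ distinct). Then $H_1 = H_2$, i.e. $H_1$ and $H_2$ have exactly the same edge set.
   Context: For a simple, undirected, connected graph $H$, its square $H^2$ is the graph on the same vertex set in which two distinct vertices are adjacent if and only if their distance in $H$ is at most $2$. The girth of a graph is the length of its shortest cycle ($\infty$ for a tree). *)

theory Defs
  imports Main
begin

definition simple_graph :: "'a set \<Rightarrow> ('a \<Rightarrow> 'a \<Rightarrow> bool) \<Rightarrow> bool" where
  "simple_graph V E \<longleftrightarrow> finite V \<and>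
     (\<forall>x y. E x y \<longrightarrow> x \<in> V \<and> y \<in> V) \<and>
     (\<forall>x y. E x y \<longrightarrow> E y x) \<and> (\<forall>x. \<not> E x x)"

definition is_walk :: "'a set \<Rightarrow> ('a \<Rightarrow> 'a \<Rightarrow> bool) \<Rightarrow> 'a list \<Rightarrow> bool" where
  "is_walk V E p \<longleftrightarrow> p \<noteq> [] \<and> set p \<subseteq> V \<and>
     (\<forall>i. Suc i < length p \<longrightarrow> E (p ! i) (p ! Suc i))"

definition connected_graph :: "'a set \<Rightarrow> ('a \<Rightarrow> 'a \<Rightarrow> bool) \<Rightarrow> bool" where
  "connected_graph V E \<longleftrightarrow>
     (\<forall>x\<in>V. \<forall>y\<in>V. \<exists>p. is_walk V E p \<and> hd p = x \<and> last p = y)"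

definition is_cycle :: "'a set \<Rightarrow> ('a \<Rightarrow> 'a \<Rightarrow> bool) \<Rightarrow> 'a list \<Rightarrow> bool" where
  "is_cycle V E c \<longleftrightarrow> length c \<ge> 3 \<and> distinct c \<and> is_walk V E c \<and> E (last c) (hd c)"

definition girth_ge :: "'a set \<Rightarrow> ('a \<Rightarrow> 'a \<Rightarrow> bool) \<Rightarrow> nat \<Rightarrow> bool" where
  "girth_ge V E k \<longleftrightarrow> (\<forall>c. is_cycle V E c \<longrightarrow> length c \<ge> k)"

definition dist_le :: "'a set \<Rightarrow> ('a \<Rightarrow> 'a \<Rightarrow> bool) \<Rightarrow> 'a \<Rightarrow> 'a \<Rightarrow> nat \<Rightarrow> bool" where
  "dist_le V E x y k \<longleftrightarrow> (\<exists>p. is_walk V E p \<and> hd p = x \<and> last p = y \<and> length p \<le> Suc k)"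

definition square :: "'a set \<Rightarrow> ('a \<Rightarrow> 'a \<Rightarrow> bool) \<Rightarrow> 'a \<Rightarrow> 'a \<Rightarrow> bool" where
  "square V E x y \<longleftrightarrow> x \<in> V \<and> y \<in> V \<and> x \<noteq> y \<and> dist_le V E x y 2"

end

theory Submission
  imports Defs
begin

lemma dist2_iff:
  assumes "simple_graph V E"
  shows "dist_le V E x y 2 \<longleftrightarrow> (x \<in> V \<and> x = y) \<or> E x y \<or> (\<exists>z. E x z \<and> E z y)"
proof
  assume "dist_le V E x y 2"
  then obtain p where p: "is_walk V E p" "hd p = x" "last p = y" "length p \<le> 3"
    by (auto simp: dist_le_def numeral_eq_Suc)
  then have ne: "p \<noteq> []" by (simp add: is_walk_def)
  show "(x \<in> V \<and> x = y) \<or> E x y \<or> (\<exists>z. E x z \<and> E z y)"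
  proof (cases p)
    case Nil then show ?thesis using ne by simp
  next
    case (Cons a q)
    show ?thesis
    proof (cases q)
      case Nil then show ?thesis using p Cons by (auto simp: is_walk_def)
    next
      case (Cons b r)
      show ?thesis
      proof (cases r)
        case Nil
        have "E (p!0) (p!Suc 0)" using p(1) \<open>p = a # q\<close> Cons Nil by (auto simp: is_walk_def)
        then show ?thesis using p \<open>p = a # q\<close> Cons Nil by auto
      next
        case (Cons c s)
        have s: "s = []" using p(4) \<open>p = a # q\<close> \<open>q = b # r\<close> Cons by auto
        have "E (p!0) (p!Suc 0)" "E (p!1) (p!Suc 1)"
          using p(1) \<open>p = a # q\<close> \<open>q = b # r\<close> Cons s by (auto simp: is_walk_def)
        then show ?thesis using p \<open>p = a # q\<close> \<open>q = b # r\<close> Cons s by auto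
      qed
    qed
  qed
next
  assume h: "(x \<in> V \<and> x = y) \<or> E x y \<or> (\<exists>z. E x z \<and> E z y)"
  have ev: "\<And>a b. E a b \<Longrightarrow> a \<in> V \<and> b \<in> V" using assms by (simp add: simple_graph_def)
  show "dist_le V E x y 2"
  proof -
    { assume "x \<in> V \<and> x = y"
      then have ?thesis unfolding dist_le_def
        by (intro exI[of _ "[x]"]) (auto simp: is_walk_def) }
    moreover
    { assume e: "E x y"
      then have ?thesis unfolding dist_le_def using ev[OF e]
        by (intro exI[of _ "[x,y]"]) (auto simp: is_walk_def) }
    moreover
    { fix z assume e: "E x z" "E z y"
      have "is_walk V E [x,z,y]" using ev[OF e(1)] ev[OF e(2)] e
        by (auto simp: is_walk_def less_Suc_eq nth_Cons')
      then have ?thesis unfolding dist_le_def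
        by (intro exI[of _ "[x,z,y]"]) auto }
    ultimately show ?thesis using h by blast
  qed
qed

lemma no3:
  assumes "simple_graph V E" "girth_ge V E 6" "E a b" "E b c" "E c a" "distinct [a,b,c]"
  shows False
proof -
  have ev: "\<And>a b. E a b \<Longrightarrow> a \<in> V \<and> b \<in> V" using assms by (simp add: simple_graph_def)
  have "is_cycle V E [a,b,c]" using assms ev[OF assms(3)] ev[OF assms(4)]
    by (auto simp: is_cycle_def is_walk_def less_Suc_eq nth_Cons')
  then show False using assms(2) by (auto simp: girth_ge_def)
qed

lemma no4:
  assumes "simple_graph V E" "girth_ge V E 6" "E a b" "E b c" "E c d" "E d a" "distinct [a,b,c,d]"
  shows False
proof -
  have ev: "\<And>a b. E a b \<Longrightarrow> a \<in> V \<and> b \<in> V" using assms by (simp add: simple_graph_def)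
  have "is_cycle V E [a,b,c,d]" using assms ev[OF assms(3)] ev[OF assms(5)]
    by (auto simp: is_cycle_def is_walk_def less_Suc_eq nth_Cons')
  then show False using assms(2) by (auto simp: girth_ge_def)
qed

lemma no5:
  assumes "simple_graph V E" "girth_ge V E 6" "E a b" "E b c" "E c d" "E d e" "E e a"
     "distinct [a,b,c,d,e]"
  shows False
proof -
  have ev: "\<And>a b. E a b \<Longrightarrow> a \<in> V \<and> b \<in> V" using assms by (simp add: simple_graph_def)
  have "is_cycle V E [a,b,c,d,e]" using assms ev[OF assms(3)] ev[OF assms(5)] ev[OF assms(6)]
    by (auto simp: is_cycle_def is_walk_def less_Suc_eq nth_Cons')
  then show False using assms(2) by (auto simp: girth_ge_def)
qed


lemma keyA:
  assumes g1: "simple_graph V E1" and g2: "simple_graph V E2"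
    and r1: "girth_ge V E1 6" and r2: "girth_ge V E2 6"
    and sq: "square V E1 = square V E2"
    and ab: "E1 a b" "E2 a b" and bc: "E1 b c" "E2 b c" and ac: "a \<noteq> c"
    and cd: "E1 c d" and db: "d \<noteq> b"
  shows "E2 c d"
proof (rule ccontr)
  assume n: "\<not> E2 c d"
  have s1: "\<And>x y. E1 x y \<Longrightarrow> E1 y x" "\<And>x. \<not> E1 x x" "\<And>x y. E1 x y \<Longrightarrow> x \<in> V \<and> y \<in> V"
    using g1 by (auto simp: simple_graph_def)
  have s2: "\<And>x y. E2 x y \<Longrightarrow> E2 y x" "\<And>x. \<not> E2 x x" "\<And>x y. E2 x y \<Longrightarrow> x \<in> V \<and> y \<in> V"
    using g2 by (auto simp: simple_graph_def)
  have sqe: "\<And>x y. square V E1 x y = square V E2 x y" using sq by simp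
  have ne: "a \<noteq> b" "b \<noteq> c" "c \<noteq> d" using ab(1) bc(1) cd s1(2) by auto
  then have da: "d \<noteq> a" using no3[OF g1 r1 ab(1) bc(1)] cd s1 ac by auto
  have "square V E1 d b" unfolding square_def dist2_iff[OF g1] using cd bc s1 db by blast
  then have Sdb: "square V E2 d b" using sqe by simp
  have "square V E1 d c" unfolding square_def dist2_iff[OF g1] using cd s1 by blast
  then have Sdc: "square V E2 d c" using sqe by simp
  have "\<not> square V E1 d a"
  proof
    assume "square V E1 d a"
    then have "E1 d a \<or> (\<exists>z. E1 d z \<and> E1 z a)" unfolding square_def dist2_iff[OF g1] by auto
    then show False
    proof
      assume "E1 d a" then show False
        using no4[OF g1 r1 ab(1) bc(1) cd] no3[OF g1 r1 bc(1) cd] da db ac ne s1 by auto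
    next
      assume "\<exists>z. E1 d z \<and> E1 z a"
      then obtain z where z: "E1 d z" "E1 z a" by blast
      show False
        using no5[OF g1 r1 ab(1) bc(1) cd z] no3[OF g1 r1 bc(1) cd] no3[OF g1 r1 ab(1) bc(1)]
          z da db ac ne s1 by (metis distinct_length_2_or_more distinct_singleton)
    qed
  qed
  then have nda: "\<not> square V E2 d a" using sqe by simp
  have dV: "d \<in> V" "a \<in> V" using s1 cd ab by auto
  have nda': "\<not> E2 d a" "\<And>z. E2 d z \<Longrightarrow> \<not> E2 z a"
    using nda da dV unfolding square_def dist2_iff[OF g2] by auto
  have ndb: "\<not> E2 d b" using nda' ab(2) s2 by blast
  then obtain e where e: "E2 d e" "E2 e b" using Sdb unfolding square_def dist2_iff[OF g2] by auto
  obtain f where f: "E2 d f" "E2 f c" using Sdc n s2 unfolding square_def dist2_iff[OF g2] by auto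
  have "e \<noteq> a" using e nda' by blast
  have "e \<noteq> c" using e n s2 by blast
  have "f \<noteq> b" using f ndb by blast
  have "e \<noteq> f" using no3[OF g2 r2 e(2) bc(2)] e f s2 \<open>e \<noteq> c\<close> ne by auto
  have "b \<noteq> c" using bc s2 by auto
  have "d \<noteq> c" using cd s1 by auto
  show False
    using no5[OF g2 r2 e(1) e(2) bc(2) s2(1)[OF f(2)] s2(1)[OF f(1)]] \<open>e \<noteq> c\<close> \<open>f \<noteq> b\<close> \<open>e \<noteq> f\<close>
      \<open>b \<noteq> c\<close> \<open>d \<noteq> c\<close> db e f s2 by auto
qed



lemma keyB:
  assumes g1: "simple_graph V E1" and g2: "simple_graph V E2"
    and r1: "girth_ge V E1 6" and r2: "girth_ge V E2 6"
    and sq: "square V E1 = square V E2"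
    and ab: "E1 a b" "E2 a b" and bc: "E1 b c" "E2 b c" and ac: "a \<noteq> c"
    and bd: "E1 b d" and da: "d \<noteq> a" and dc: "d \<noteq> c"
  shows "E2 b d"
proof (rule ccontr)
  assume n: "\<not> E2 b d"
  have s1: "\<And>x y. E1 x y \<Longrightarrow> E1 y x" "\<And>x. \<not> E1 x x" "\<And>x y. E1 x y \<Longrightarrow> x \<in> V \<and> y \<in> V"
    using g1 by (auto simp: simple_graph_def)
  have s2: "\<And>x y. E2 x y \<Longrightarrow> E2 y x" "\<And>x. \<not> E2 x x" "\<And>x y. E2 x y \<Longrightarrow> x \<in> V \<and> y \<in> V"
    using g2 by (auto simp: simple_graph_def)
  have sqe: "\<And>x y. square V E1 x y = square V E2 x y" using sq by simp
  have ne: "a \<noteq> b" "b \<noteq> c" "b \<noteq> d" using ab(1) bc(1) bd s1(2) by auto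
  have ba: "E1 b a" using s1(1)[OF ab(1)] .
  have "square V E1 d a" unfolding square_def dist2_iff[OF g1] using s1(1)[OF bd] ba da s1(3)[OF bd] s1(3)[OF ab(1)] by blast
  then have Sda: "square V E2 d a" using sqe by simp
  have "square V E1 d c" unfolding square_def dist2_iff[OF g1] using s1(1)[OF bd] bc(1) dc s1(3)[OF bd] s1(3)[OF bc(1)] by blast
  then have Sdc: "square V E2 d c" using sqe by simp
  have "square V E1 d b" unfolding square_def dist2_iff[OF g1] using s1(1)[OF bd] ne s1(3)[OF bd] by blast
  then have Sdb: "square V E2 d b" using sqe by simp
  have ndb: "\<not> E2 d b" using n s2(1) by blast
  obtain z where z: "E2 d z" "E2 z b" using Sdb ndb unfolding square_def dist2_iff[OF g2] by blast
  show False
  proof (cases "E2 d a")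
    case True
    note da2 = True
    show False
    proof (cases "E2 d c")
      case True
      show False using no4[OF g2 r2 da2 ab(2) bc(2) s2(1)[OF True]] da dc ac ne by auto
    next
      case False
      obtain y where y: "E2 d y" "E2 y c" using Sdc False s2(1) unfolding square_def dist2_iff[OF g2] by blast
      have "y \<noteq> b" using y ndb by blast
      have "y \<noteq> a"
      proof
        assume "y = a"
        then have "E2 c a" using s2(1)[OF y(2)] by simp
        then show False using no3[OF g2 r2 ab(2) bc(2)] ac ne by simp
      qed
      have "y \<noteq> d" "y \<noteq> c" using y s2(2) by blast+
      show False using no5[OF g2 r2 da2 ab(2) bc(2) s2(1)[OF y(2)] s2(1)[OF y(1)]]
        \<open>y \<noteq> b\<close> \<open>y \<noteq> a\<close> \<open>y \<noteq> d\<close> \<open>y \<noteq> c\<close> da dc ac ne by auto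
    qed
  next
    case False
    obtain x where x: "E2 d x" "E2 x a" using Sda False da unfolding square_def dist2_iff[OF g2] by auto
    have "x \<noteq> b" using x ndb by blast
    have "z \<noteq> a" using z False by blast
    have "x \<noteq> z"
    proof
      assume "x = z"
      then have "E2 b x" using s2(1)[OF z(2)] by simp
      then show False using no3[OF g2 r2 ab(2) _ x(2)] \<open>x = z\<close> \<open>z \<noteq> a\<close> \<open>x \<noteq> b\<close> ne by simp
    qed
    have "x \<noteq> d" "x \<noteq> a" "z \<noteq> d" "z \<noteq> b" using x z s2(2) by blast+
    show False using no5[OF g2 r2 x(1) x(2) ab(2) s2(1)[OF z(2)] s2(1)[OF z(1)]]
      \<open>x \<noteq> b\<close> \<open>z \<noteq> a\<close> \<open>x \<noteq> z\<close> \<open>x \<noteq> d\<close> \<open>x \<noteq> a\<close> \<open>z \<noteq> d\<close> \<open>z \<noteq> b\<close> da ne by auto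
  qed
qed

lemma walk_snoc:
  assumes "is_walk V E (xs @ [x])" "xs \<noteq> []"
  shows "is_walk V E xs \<and> E (last xs) x"
proof -
  have w: "\<And>i. Suc i < length xs + 1 \<Longrightarrow> E ((xs@[x]) ! i) ((xs@[x]) ! Suc i)"
    using assms(1) by (auto simp: is_walk_def)
  have "E (xs ! i) (xs ! Suc i)" if "Suc i < length xs" for i
    using w[of i] that by (simp add: nth_append)
  then have "is_walk V E xs" using assms unfolding is_walk_def by auto
  moreover have "E (last xs) x"
    using w[of "length xs - 1"] assms(2) by (simp add: nth_append last_conv_nth)
  ultimately show ?thesis by simp
qed

lemma sub:
  assumes g1: "simple_graph V E1" and g2: "simple_graph V E2"
    and r1: "girth_ge V E1 6" and r2: "girth_ge V E2 6"
    and sq: "square V E1 = square V E2" and c1: "connected_graph V E1"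
    and uw: "u \<noteq> w" and uv1: "E1 u v" and vw1: "E1 v w" and uv2: "E2 u v" and vw2: "E2 v w"
    and xy: "E1 x y"
  shows "E2 x y"
proof -
  have s1: "\<And>x y. E1 x y \<Longrightarrow> E1 y x" "\<And>x y. E1 x y \<Longrightarrow> x \<in> V \<and> y \<in> V"
    using g1 by (auto simp: simple_graph_def)
  have s2: "\<And>x y. E2 x y \<Longrightarrow> E2 y x"
    using g2 by (auto simp: simple_graph_def)
  define C where "C a b \<longleftrightarrow> E1 a b \<and> E2 a b" for a b
  have Cs: "C b a" if "C a b" for a b using that s1(1) s2 unfolding C_def by blast
  define R where "R c \<longleftrightarrow> (\<exists>a b. C a b \<and> C b c \<and> a \<noteq> c) \<or> (\<exists>a b. C a c \<and> C c b \<and> a \<noteq> b)" for c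
  have step: "R d \<and> E2 c d" if Rc: "R c" and Ecd: "E1 c d" for c d
  proof -
    from Rc[unfolded R_def] show ?thesis
    proof (elim disjE exE conjE)
      fix a b assume ab: "C a b" and bc: "C b c" and ac: "a \<noteq> c"
      show ?thesis
      proof (cases "d = b")
        case True
        have "C a d" "C d c" using ab bc True by simp_all
        then have "R d" unfolding R_def using ac by blast
        moreover have "E2 c d" using Cs[OF bc] True unfolding C_def by simp
        ultimately show ?thesis by simp
      next
        case False
        have e: "E2 c d" using keyA[OF g1 g2 r1 r2 sq _ _ _ _ ac Ecd False] ab bc unfolding C_def by blast
        then have "C c d" using Ecd unfolding C_def by simp
        then have "R d" unfolding R_def using bc False by blast
        then show ?thesis using e by simp
      qed
    next
      fix a b assume ac: "C a c" and cb: "C c b" and ab: "a \<noteq> b"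
      show ?thesis
      proof (cases "d = a \<or> d = b")
        case True
        then show ?thesis
        proof
          assume "d = a"
          then have "C b c" "C c d" using Cs[OF cb] Cs[OF ac] by simp_all
          then have "R d" unfolding R_def using ab \<open>d = a\<close> by blast
          then show ?thesis using \<open>C c d\<close> unfolding C_def by simp
        next
          assume "d = b"
          then have "R d" unfolding R_def using ac cb ab by blast
          then show ?thesis using cb \<open>d = b\<close> unfolding C_def by simp
        qed
      next
        case False
        have e: "E2 c d" using keyB[OF g1 g2 r1 r2 sq _ _ _ _ ab Ecd] ac cb False unfolding C_def by blast
        then have "C c d" using Ecd unfolding C_def by simp
        then have "R d" unfolding R_def using ac False by blast
        then show ?thesis using e by simp
      qed
    qed
  qed
  have "C w v" "C v u" using uv1 vw1 uv2 vw2 Cs unfolding C_def by blast+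
  then have Ru: "R u" unfolding R_def using uw by blast
  have "R (last p)" if "is_walk V E1 p" "hd p = u" for p
    using that
  proof (induction p rule: rev_induct)
    case Nil then show ?case by (simp add: is_walk_def)
  next
    case (snoc z zs)
    show ?case
    proof (cases "zs = []")
      case True
      then have "z = u" using snoc(3) by simp
      then show ?thesis using Ru True by simp
    next
      case False
      from walk_snoc[OF snoc(2) False] have w: "is_walk V E1 zs" and e: "E1 (last zs) z" by auto
      have "hd zs = u" using snoc(3) False by simp
      then have "R (last zs)" using snoc(1) w by blast
      then show ?thesis using step[OF _ e] by simp
    qed
  qed
  moreover have "x \<in> V" "u \<in> V" using s1(2) xy uv1 by blast+
  moreover obtain p where "is_walk V E1 p" "hd p = u" "last p = x"
    using c1 \<open>x \<in> V\<close> \<open>u \<in> V\<close> unfolding connected_graph_def by blast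
  ultimately have "R x" by blast
  then show ?thesis using step xy by blast
qed

theorem lemma1:
  fixes V :: "'a set" and E1 E2 :: "'a \<Rightarrow> 'a \<Rightarrow> bool" and u v w :: 'a
  assumes "simple_graph V E1" and "simple_graph V E2"
    and "connected_graph V E1" and "connected_graph V E2"
    and "girth_ge V E1 6" and "girth_ge V E2 6"
    and "square V E1 = square V E2"
    and "u \<noteq> v" and "v \<noteq> w" and "u \<noteq> w"
    and "E1 u v" and "E1 v w" and "E2 u v" and "E2 v w"
  shows "E1 = E2"
proof (intro ext iffI)
  fix x y
  show "E1 x y \<Longrightarrow> E2 x y"
    using sub[OF assms(1,2,5,6,7,3,10,11,12,13,14)] by blast
  show "E2 x y \<Longrightarrow> E1 x y"
    using sub[OF assms(2,1,6,5) assms(7)[symmetric] assms(4,10,13,14,11,12)] by blast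
qed

end
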